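(* Let $M$ be an $N$-person normal form game matrix of dimensions $m_1\times\cdots\times m_N$ with payoffs $a^k_{i_1\dots i_N}$, and fix a profile $(p_1,\dots,p_N)$ with $1\le p_k\le m_k$. Let $S$ be the set of profiles that differ from $(p_1,\dots,p_N)$ in at most one coordinate. Suppose we are given real numbers $x^k_{\sigma}$ for each player $k\in\{1,\dots,N\}$ and each profile $\sigma\in S$, such that $\sum_{k=1}^N x^k_\sigma=\sum_{k=1}^N a^k_\sigma$ for every $\sigma\in S$. Then there is a unique $N$-person normal form game matrix $\widehat M$ of dimensions $m_1\times\cdots\times m_N$ with payoffs $\hat a^k$ such that $\widehat M$ can be obtained from $M$ by an OI-transformation and $\hat a^k_\sigma=x^k_\sigma$ for all $k$ and all $\sigma\in S$.
   Context: An $N$-person normal form game matrix of dimensions $m_1\times\cdots\times m_N$ assigns to each strategy profile $(i_1,\dots,i_N)$ with $1\le i_k\le m_k$ a payoff vector $(a^1_{i_1\dots i_N},\dots,a^N_{i_1\dots i_N})\in\mathbb{R}^N$, where $a^k$ is the payoff of player $k$ and $i_k$ indexes the strategy of player $k$. A preplay offer by player $p$ to player $q\neq p$ of amount $\delta\ge 0$ contingent on strategy $s$ of $q$ transforms a matrix by replacing, at every profile with $i_q=s$, the payoff $a^p$ by $a^p-\delta$ and $a^q$ by $a^q+\delta$, leaving all other payoffs unchanged; this map is a POI-transformation. An OI-transformation is any composition of finitely many POI-transformations. $\widehat M$ "can be obtained from $M$ by an OI-transformation" means $\widehat M=\tau(M)$ for some OI-transformation $\tau$. *)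

theory Defs
  imports Complex_Main "HOL-Library.FuncSet"
begin

text \<open>A game matrix is a payoff function
a k sigma (payoff of player k at profile sigma), extensional in both arguments.\<close>

definition profiles :: "nat \<Rightarrow> (nat \<Rightarrow> nat) \<Rightarrow> (nat \<Rightarrow> nat) set" where
  "profiles N m = PiE {1..N} (\<lambda>k. {1..m k})"

definition game_matrix :: "nat \<Rightarrow> (nat \<Rightarrow> nat) \<Rightarrow> (nat \<Rightarrow> (nat \<Rightarrow> nat) \<Rightarrow> real) \<Rightarrow> bool" where
  "game_matrix N m a \<longleftrightarrow> a \<in> {1..N} \<rightarrow>\<^sub>E (profiles N m \<rightarrow>\<^sub>E (UNIV :: real set))"

text \<open>Preplay offer by player p to player q of amount d contingent on strategy s of q.\<close>
definition poi :: "nat \<Rightarrow> (nat \<Rightarrow> nat) \<Rightarrow> nat \<Rightarrow> nat \<Rightarrow> nat \<Rightarrow> real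
    \<Rightarrow> (nat \<Rightarrow> (nat \<Rightarrow> nat) \<Rightarrow> real) \<Rightarrow> (nat \<Rightarrow> (nat \<Rightarrow> nat) \<Rightarrow> real)" where
  "poi N m p q s d a = (\<lambda>k \<sigma>.
     if k \<in> {1..N} \<and> \<sigma> \<in> profiles N m \<and> \<sigma> q = s then
       (if k = p then a k \<sigma> - d else if k = q then a k \<sigma> + d else a k \<sigma>)
     else a k \<sigma>)"

definition valid_poi :: "nat \<Rightarrow> (nat \<Rightarrow> nat) \<Rightarrow> nat \<Rightarrow> nat \<Rightarrow> nat \<Rightarrow> real \<Rightarrow> bool" where
  "valid_poi N m p q s d \<longleftrightarrow> p \<in> {1..N} \<and> q \<in> {1..N} \<and> p \<noteq> q \<and> s \<in> {1..m q} \<and> d \<ge> 0"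

inductive oi_reach :: "nat \<Rightarrow> (nat \<Rightarrow> nat) \<Rightarrow> (nat \<Rightarrow> (nat \<Rightarrow> nat) \<Rightarrow> real)
    \<Rightarrow> (nat \<Rightarrow> (nat \<Rightarrow> nat) \<Rightarrow> real) \<Rightarrow> bool" for N m where
  oi_refl: "oi_reach N m a a"
| oi_step: "oi_reach N m a b \<Longrightarrow> valid_poi N m p q s d \<Longrightarrow> oi_reach N m a (poi N m p q s d b)"

definition near_profiles :: "nat \<Rightarrow> (nat \<Rightarrow> nat) \<Rightarrow> (nat \<Rightarrow> nat) \<Rightarrow> (nat \<Rightarrow> nat) set" where
  "near_profiles N m p = {\<sigma> \<in> profiles N m. card {i \<in> {1..N}. \<sigma> i \<noteq> p i} \<le> 1}"

end

theory Submission imports Defs begin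

definition EE :: "nat \<Rightarrow> (nat\<Rightarrow>nat) \<Rightarrow> nat \<Rightarrow> nat \<Rightarrow> nat \<Rightarrow> nat \<Rightarrow> (nat\<Rightarrow>nat) \<Rightarrow> real" where
"EE N m p q s k \<sigma> = (if k\<in>{1..N} \<and> \<sigma>\<in>profiles N m \<and> \<sigma> q = s then (if k=p then -1 else if k=q then 1 else 0) else 0)"

lemma poi_EE: "poi N m p q s d b = (\<lambda>k \<sigma>. b k \<sigma> + d * EE N m p q s k \<sigma>)"
  by (auto simp: poi_def EE_def fun_eq_iff)

lemma sum_pos:
  assumes "oi_reach N m a b" "finite T" "T \<subseteq> {1..m q}" "\<forall>t\<in>T. c t \<ge> 0" "p\<in>{1..N}" "q\<in>{1..N}" "p\<noteq>q"
  shows "oi_reach N m a (\<lambda>k \<sigma>. b k \<sigma> + (\<Sum>t\<in>T. c t * EE N m p q t k \<sigma>))"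
  using assms(2,3,4)
proof (induction T rule: finite_induct)
  case empty
  then show ?case using assms(1) by simp
next
  case (insert t T)
  then have r: "oi_reach N m a (\<lambda>k \<sigma>. b k \<sigma> + (\<Sum>t\<in>T. c t * EE N m p q t k \<sigma>))" by auto
  have v: "valid_poi N m p q t (c t)" using insert assms unfolding valid_poi_def by auto
  have "oi_reach N m a (poi N m p q t (c t) (\<lambda>k \<sigma>. b k \<sigma> + (\<Sum>t\<in>T. c t * EE N m p q t k \<sigma>)))"
    by (rule oi_step[OF r v])
  moreover have "poi N m p q t (c t) (\<lambda>k \<sigma>. b k \<sigma> + (\<Sum>t\<in>T. c t * EE N m p q t k \<sigma>))
     = (\<lambda>k \<sigma>. b k \<sigma> + (\<Sum>t\<in>insert t T. c t * EE N m p q t k \<sigma>))"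
    using insert by (simp add: poi_EE algebra_simps)
  ultimately show ?case by simp
qed

lemma prof_mem: "\<sigma> \<in> profiles N m \<Longrightarrow> q \<in> {1..N} \<Longrightarrow> \<sigma> q \<in> {1..m q}"
  unfolding profiles_def by (auto simp: PiE_iff)

lemma sum_EE:
  assumes "finite A" "k'\<in>{1..N}" "\<sigma>\<in>profiles N m" 
  shows "(\<Sum>t\<in>A. f t * EE N m p q t k' \<sigma>) = (if \<sigma> q \<in> A then f (\<sigma> q) * (if k'=p then -1 else if k'=q then 1 else 0) else 0)"
proof -
  have "(\<Sum>t\<in>A. f t * EE N m p q t k' \<sigma>) = (\<Sum>t\<in>A. if \<sigma> q = t then f t * (if k'=p then -1 else if k'=q then 1 else 0) else 0)"
    using assms by (intro sum.cong) (auto simp: EE_def)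
  also have "\<dots> = (if \<sigma> q \<in> A then f (\<sigma> q) * (if k'=p then -1 else if k'=q then 1 else 0) else 0)"
    using assms(1) by (simp add: sum.delta)
  finally show ?thesis .
qed

definition Dm :: "nat \<Rightarrow> (nat\<Rightarrow>nat) \<Rightarrow> nat \<Rightarrow> nat \<Rightarrow> (nat \<Rightarrow> real) \<Rightarrow> nat \<Rightarrow> (nat\<Rightarrow>nat) \<Rightarrow> real" where
"Dm N m k q g k' \<sigma> = (if k'\<in>{1..N} \<and> \<sigma>\<in>profiles N m then (if k'=k then g (\<sigma> q) else if k'=q then - g (\<sigma> q) else 0) else 0)"

lemma Dm_reach:
  assumes "oi_reach N m a b" "k\<in>{1..N}" "q\<in>{1..N}" "k\<noteq>q"
  shows "oi_reach N m a (\<lambda>k' \<sigma>. b k' \<sigma> + Dm N m k q g k' \<sigma>)"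
proof -
  define C where "C = (\<Sum>t\<in>{1..m q}. \<bar>g t\<bar>)"
  have Cg: "\<forall>t\<in>{1..m q}. C - g t \<ge> 0"
  proof
    fix t assume "t\<in>{1..m q}"
    then have "\<bar>g t\<bar> \<le> C" unfolding C_def
      by (intro member_le_sum) auto
    then show "C - g t \<ge> 0" by linarith
  qed
  have C0: "C \<ge> 0" unfolding C_def by (intro sum_nonneg) auto
  define b1 where "b1 = (\<lambda>k' \<sigma>. b k' \<sigma> + (\<Sum>t\<in>{1..m q}. (C - g t) * EE N m k q t k' \<sigma>))"
  have r1: "oi_reach N m a b1" unfolding b1_def
    by (rule sum_pos) (use assms Cg in auto)
  have r2: "oi_reach N m a (\<lambda>k' \<sigma>. b1 k' \<sigma> + (\<Sum>t\<in>{1..m k}. C * EE N m q k t k' \<sigma>))"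
    by (rule sum_pos) (use assms r1 C0 in auto)
  have eq: "(\<lambda>k' \<sigma>. b1 k' \<sigma> + (\<Sum>t\<in>{1..m k}. C * EE N m q k t k' \<sigma>)) = (\<lambda>k' \<sigma>. b k' \<sigma> + Dm N m k q g k' \<sigma>)"
  proof (intro ext)
    fix k' \<sigma>
    show "b1 k' \<sigma> + (\<Sum>t\<in>{1..m k}. C * EE N m q k t k' \<sigma>) = b k' \<sigma> + Dm N m k q g k' \<sigma>"
    proof (cases "k'\<in>{1..N} \<and> \<sigma>\<in>profiles N m")
      case True
      have s1: "(\<Sum>t\<in>{1..m q}. (C - g t) * EE N m k q t k' \<sigma>) = (C - g (\<sigma> q)) * (if k'=k then -1 else if k'=q then 1 else 0)"
        using True prof_mem[of \<sigma> N m q] assms by (subst sum_EE) auto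
      have s2: "(\<Sum>t\<in>{1..m k}. C * EE N m q k t k' \<sigma>) = C * (if k'=q then -1 else if k'=k then 1 else 0)"
        using True prof_mem[of \<sigma> N m k] assms by (subst sum_EE[where f="\<lambda>_. C"]) auto
      show ?thesis unfolding b1_def s1 s2
        using True assms by (auto simp: Dm_def algebra_simps)
    next
      case False
      then show ?thesis unfolding b1_def by (auto simp: EE_def Dm_def)
    qed
  qed
  show ?thesis using r2 eq by simp
qed

lemma inner_reach:
  assumes "oi_reach N m a b" "finite Q" "Q \<subseteq> {1..N} - {k}" "k\<in>{1..N}"
  shows "oi_reach N m a (\<lambda>k' \<sigma>. b k' \<sigma> + (\<Sum>q\<in>Q. Dm N m k q (G k q) k' \<sigma>))"
  using assms(2,3)
proof (induction Q rule: finite_induct)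
  case empty then show ?case using assms(1) by simp
next
  case (insert q Q)
  then have "oi_reach N m a (\<lambda>k' \<sigma>. (b k' \<sigma> + (\<Sum>q\<in>Q. Dm N m k q (G k q) k' \<sigma>)) + Dm N m k q (G k q) k' \<sigma>)"
    using assms(4) by (intro Dm_reach[where b="\<lambda>k' \<sigma>. b k' \<sigma> + (\<Sum>q\<in>Q. Dm N m k q (G k q) k' \<sigma>)", simplified]) auto
  then show ?case using insert by (simp add: algebra_simps)
qed

lemma outer_reach:
  assumes "oi_reach N m a b" "finite K" "K \<subseteq> {1..N}"
  shows "oi_reach N m a (\<lambda>k' \<sigma>. b k' \<sigma> + (\<Sum>k\<in>K. \<Sum>q\<in>{1..N}-{k}. Dm N m k q (G k q) k' \<sigma>))"
  using assms(2,3)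
proof (induction K rule: finite_induct)
  case empty then show ?case using assms(1) by simp
next
  case (insert k K)
  then have "oi_reach N m a (\<lambda>k' \<sigma>. (b k' \<sigma> + (\<Sum>k\<in>K. \<Sum>q\<in>{1..N}-{k}. Dm N m k q (G k q) k' \<sigma>)) + (\<Sum>q\<in>{1..N}-{k}. Dm N m k q (G k q) k' \<sigma>))"
    by (intro inner_reach) auto
  then show ?case using insert by (simp add: algebra_simps)
qed

lemma double_sum:
  fixes A :: "nat \<Rightarrow> nat \<Rightarrow> real"
  assumes "finite K" "k'\<in>K"
  shows "(\<Sum>k\<in>K. \<Sum>q\<in>K-{k}. (if k'=k then A k q else if k'=q then - A k q else 0))
       = (\<Sum>q\<in>K-{k'}. A k' q) - (\<Sum>k\<in>K-{k'}. A k k')"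
proof -
  have "(\<Sum>k\<in>K. \<Sum>q\<in>K-{k}. (if k'=k then A k q else if k'=q then - A k q else 0))
     = (\<Sum>q\<in>K-{k'}. A k' q) + (\<Sum>k\<in>K-{k'}. \<Sum>q\<in>K-{k}. (if k'=k then A k q else if k'=q then - A k q else 0))"
    using assms by (simp add: sum.remove)
  also have "(\<Sum>k\<in>K-{k'}. \<Sum>q\<in>K-{k}. (if k'=k then A k q else if k'=q then - A k q else 0))
      = (\<Sum>k\<in>K-{k'}. - A k k')"
  proof (rule sum.cong)
    fix k assume "k \<in> K - {k'}"
    then have "(\<Sum>q\<in>K-{k}. (if k'=k then A k q else if k'=q then - A k q else 0)) = (\<Sum>q\<in>K-{k}. (if k'=q then - A k q else 0))"
      by (intro sum.cong) auto
    also have "\<dots> = - A k k'" using assms \<open>k \<in> K - {k'}\<close> by (simp add: sum.delta)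
    finally show "(\<Sum>q\<in>K-{k}. (if k'=k then A k q else if k'=q then - A k q else 0)) = - A k k'" .
  qed simp
  finally show ?thesis by (simp add: sum_negf)
qed

lemma reach_inv:
  assumes "oi_reach N m a b"
  shows "(\<forall>k \<sigma>. \<not>(k\<in>{1..N} \<and> \<sigma>\<in>profiles N m) \<longrightarrow> b k \<sigma> = a k \<sigma>) \<and>
    (\<exists>H. \<forall>k\<in>{1..N}. \<forall>\<sigma>\<in>profiles N m. b k \<sigma> = a k \<sigma> + (\<Sum>q\<in>{1..N}. H k q (\<sigma> q)))"
  using assms
proof (induction rule: oi_reach.induct)
  case oi_refl
  then show ?case by (intro conjI exI[of _ "\<lambda>_ _ _. 0"]) auto
next
  case (oi_step a b p q s d)
  then obtain H where H: "\<forall>k\<in>{1..N}. \<forall>\<sigma>\<in>profiles N m. b k \<sigma> = a k \<sigma> + (\<Sum>q\<in>{1..N}. H k q (\<sigma> q))" by blast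
  define H' where "H' = (\<lambda>k q' t. H k q' t + (if q' = q \<and> t = s then (if k=p then -d else if k=q then d else 0) else 0))"
  have qN: "q\<in>{1..N}" using oi_step(2) unfolding valid_poi_def by auto
  have "\<forall>k\<in>{1..N}. \<forall>\<sigma>\<in>profiles N m. poi N m p q s d b k \<sigma> = a k \<sigma> + (\<Sum>q\<in>{1..N}. H' k q (\<sigma> q))"
  proof (intro ballI)
    fix k \<sigma> assume k: "k\<in>{1..N}" and \<sigma>: "\<sigma>\<in>profiles N m"
    have "(\<Sum>q'\<in>{1..N}. H' k q' (\<sigma> q')) = (\<Sum>q'\<in>{1..N}. H k q' (\<sigma> q')) + (\<Sum>q'\<in>{1..N}. (if q' = q then (if \<sigma> q = s then (if k=p then -d else if k=q then d else 0) else 0) else 0))"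
      unfolding H'_def sum.distrib by (intro arg_cong2[where f="(+)"] sum.cong) auto
    also have "(\<Sum>q'\<in>{1..N}. (if q' = q then (if \<sigma> q = s then (if k=p then -d else if k=q then d else 0) else 0) else 0)) = (if \<sigma> q = s then (if k=p then -d else if k=q then d else 0) else 0)"
      using qN by (simp add: sum.delta)
    finally show "poi N m p q s d b k \<sigma> = a k \<sigma> + (\<Sum>q\<in>{1..N}. H' k q (\<sigma> q))"
      using H k \<sigma> by (auto simp: poi_def)
  qed
  then show ?case using oi_step by (auto simp: poi_def)
qed

lemma upd_near:
  assumes "p \<in> profiles N m" "j\<in>{1..N}" "t\<in>{1..m j}"
  shows "p(j:=t) \<in> near_profiles N m p"
proof -
  have "p(j:=t) \<in> profiles N m" using assms unfolding profiles_def by (auto simp: PiE_iff extensional_def)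
  moreover have "{i \<in> {1..N}. (p(j:=t)) i \<noteq> p i} \<subseteq> {j}" by auto
  then have "card {i \<in> {1..N}. (p(j:=t)) i \<noteq> p i} \<le> card {j}" by (intro card_mono) auto
  ultimately show ?thesis unfolding near_profiles_def by auto
qed

lemma near_upd:
  assumes "p \<in> profiles N m" "\<sigma> \<in> near_profiles N m p" "j0 \<in> {1..N}"
  shows "\<exists>j\<in>{1..N}. \<sigma> = p(j:=\<sigma> j)"
proof -
  define D where "D = {i \<in> {1..N}. \<sigma> i \<noteq> p i}"
  have s: "\<sigma> \<in> profiles N m" and c: "card D \<le> 1" using assms(2) unfolding near_profiles_def D_def by auto
  have out: "\<And>i. i \<notin> {1..N} \<Longrightarrow> \<sigma> i = p i" using s assms(1) unfolding profiles_def by (auto simp: PiE_iff extensional_def)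
  show ?thesis
  proof (cases "D = {}")
    case True
    then have "\<sigma> = p(j0:=\<sigma> j0)" using out unfolding D_def by (auto simp: fun_eq_iff)
    then show ?thesis using assms(3) by blast
  next
    case False
    have "finite D" unfolding D_def by auto
    then have "card D = 1" using False c card_0_eq[of D] by linarith
    then obtain j where "D = {j}" by (auto simp: card_Suc_eq)
    then have "j \<in> {1..N}" "\<sigma> = p(j:=\<sigma> j)" using out unfolding D_def by (auto simp: fun_eq_iff)
    then show ?thesis by blast
  qed
qed

lemma sep_zero:
  assumes "p \<in> profiles N m" "\<forall>\<tau>\<in>near_profiles N m p. (\<Sum>q\<in>{1..N}. H q (\<tau> q)) = (0::real)" "\<sigma> \<in> profiles N m"
  shows "(\<Sum>q\<in>{1..N}. H q (\<sigma> q)) = 0"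
proof -
  have pn: "p \<in> near_profiles N m p" using assms(1) unfolding near_profiles_def by auto
  have "\<forall>j\<in>{1..N}. H j (\<sigma> j) = H j (p j)"
  proof
    fix j assume j: "j\<in>{1..N}"
    have tn: "p(j:=\<sigma> j) \<in> near_profiles N m p" using upd_near[OF assms(1) j prof_mem[OF assms(3) j]] .
    have "(\<Sum>q\<in>{1..N}. H q ((p(j:=\<sigma> j)) q)) = H j (\<sigma> j) + (\<Sum>q\<in>{1..N}-{j}. H q (p q))"
      using j by (simp add: sum.remove)
    moreover have "(\<Sum>q\<in>{1..N}. H q (p q)) = H j (p j) + (\<Sum>q\<in>{1..N}-{j}. H q (p q))"
      using j by (simp add: sum.remove)
    ultimately show "H j (\<sigma> j) = H j (p j)" using assms(2) tn pn by auto
  qed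
  then have "(\<Sum>q\<in>{1..N}. H q (\<sigma> q)) = (\<Sum>q\<in>{1..N}. H q (p q))" by (intro sum.cong) auto
  then show ?thesis using assms(2) pn by auto
qed

lemma gm_from_reach:
  assumes "game_matrix N m a" "oi_reach N m a b"
  shows "game_matrix N m b"
proof -
  have o: "\<And>k \<sigma>. \<not>(k\<in>{1..N} \<and> \<sigma>\<in>profiles N m) \<Longrightarrow> b k \<sigma> = a k \<sigma>" using reach_inv[OF assms(2)] by blast
  show ?thesis using assms(1) o unfolding game_matrix_def
    by (auto simp: PiE_iff extensional_def)
qed

theorem theorem4:
  fixes N :: nat and m :: "nat \<Rightarrow> nat"
    and a x :: "nat \<Rightarrow> (nat \<Rightarrow> nat) \<Rightarrow> real" and p :: "nat \<Rightarrow> nat"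
  assumes "game_matrix N m a"
    and "p \<in> profiles N m"
    and "\<forall>\<sigma>\<in>near_profiles N m p. (\<Sum>k=1..N. x k \<sigma>) = (\<Sum>k=1..N. a k \<sigma>)"
  shows "\<exists>!ah. game_matrix N m ah \<and> oi_reach N m a ah \<and>
           (\<forall>k\<in>{1..N}. \<forall>\<sigma>\<in>near_profiles N m p. ah k \<sigma> = x k \<sigma>)"
proof -
  define K where "K = {1..N::nat}"
  define w where "w = (\<lambda>k \<tau>. x k \<tau> - a k \<tau>)"
  define G where "G = (\<lambda>k q t. w k (p(q:=t)) - w k p + (if q = 1 then w k p else 0))"
  define ah where "ah = (\<lambda>k' \<sigma>. a k' \<sigma> + (\<Sum>k\<in>{1..N}. \<Sum>q\<in>{1..N}-{k}. Dm N m k q (G k q) k' \<sigma>))"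
  have zs: "\<And>\<tau>. \<tau> \<in> near_profiles N m p \<Longrightarrow> (\<Sum>k\<in>K. w k \<tau>) = 0"
    using assms(3) unfolding w_def K_def by (simp add: sum_subtractf)
  have zs': "\<And>\<tau> k'. \<tau> \<in> near_profiles N m p \<Longrightarrow> k' \<in> K \<Longrightarrow> (\<Sum>k\<in>K-{k'}. w k \<tau>) = - w k' \<tau>"
  proof -
    fix \<tau> k' assume "\<tau> \<in> near_profiles N m p" "k' \<in> K"
    then show "(\<Sum>k\<in>K-{k'}. w k \<tau>) = - w k' \<tau>" using zs[of \<tau>] sum.remove[of K k' "\<lambda>k. w k \<tau>"]
      unfolding K_def by simp
  qed
  have pn: "p \<in> near_profiles N m p" using assms(2) unfolding near_profiles_def by auto
  have reach: "oi_reach N m a ah" unfolding ah_def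
    using outer_reach[OF oi_refl, of "{1..N}" N m a G] by simp
  have vals: "\<forall>k'\<in>{1..N}. \<forall>\<sigma>\<in>near_profiles N m p. ah k' \<sigma> = x k' \<sigma>"
  proof (intro ballI)
    fix k' \<sigma> assume k': "k'\<in>{1..N}" and \<sigma>: "\<sigma>\<in>near_profiles N m p"
    have sp: "\<sigma> \<in> profiles N m" using \<sigma> unfolding near_profiles_def by auto
    have kK: "k' \<in> K" using k' unfolding K_def by simp
    have "(\<Sum>k\<in>{1..N}. \<Sum>q\<in>{1..N}-{k}. Dm N m k q (G k q) k' \<sigma>)
       = (\<Sum>k\<in>K. \<Sum>q\<in>K-{k}. (if k'=k then G k q (\<sigma> q) else if k'=q then - G k q (\<sigma> q) else 0))"
      unfolding K_def Dm_def using k' sp by simp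
    also have "\<dots> = (\<Sum>q\<in>K-{k'}. G k' q (\<sigma> q)) - (\<Sum>k\<in>K-{k'}. G k k' (\<sigma> k'))"
      by (rule double_sum[where A="\<lambda>k q. G k q (\<sigma> q)"]) (use kK K_def in auto)
    also have "(\<Sum>k\<in>K-{k'}. G k k' (\<sigma> k')) = - G k' k' (\<sigma> k')"
    proof -
      have tn: "p(k':=\<sigma> k') \<in> near_profiles N m p" using upd_near[OF assms(2) k' prof_mem[OF sp k']] .
      have "(\<Sum>k\<in>K-{k'}. G k k' (\<sigma> k')) = (\<Sum>k\<in>K-{k'}. w k (p(k':=\<sigma> k'))) - (\<Sum>k\<in>K-{k'}. w k p) + (if k' = 1 then (\<Sum>k\<in>K-{k'}. w k p) else 0)"
        unfolding G_def by (simp add: sum.distrib sum_subtractf)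
      then show ?thesis using zs'[OF tn kK] zs'[OF pn kK] unfolding G_def by (cases "k' = 1") simp_all
    qed
    finally have e1: "(\<Sum>k\<in>{1..N}. \<Sum>q\<in>{1..N}-{k}. Dm N m k q (G k q) k' \<sigma>) = (\<Sum>q\<in>K. G k' q (\<sigma> q))"
      using kK sum.remove[of K k' "\<lambda>q. G k' q (\<sigma> q)"] unfolding K_def by simp
    obtain j where j: "j\<in>{1..N}" "\<sigma> = p(j:=\<sigma> j)" using near_upd[OF assms(2) \<sigma> k'] by blast
    have "(\<Sum>q\<in>K. G k' q (\<sigma> q)) = (\<Sum>q\<in>K. (w k' (p(q:=\<sigma> q)) - w k' p)) + (\<Sum>q\<in>K. (if q = 1 then w k' p else 0))"
      unfolding G_def by (simp add: sum.distrib)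
    also have "(\<Sum>q\<in>K. (if q = 1 then w k' p else 0)) = w k' p"
      using k' unfolding K_def by (simp add: sum.delta)
    also have "(\<Sum>q\<in>K. (w k' (p(q:=\<sigma> q)) - w k' p)) = (\<Sum>q\<in>K. (if q = j then w k' \<sigma> - w k' p else 0))"
    proof (rule sum.cong)
      fix q assume "q \<in> K"
      show "w k' (p(q:=\<sigma> q)) - w k' p = (if q = j then w k' \<sigma> - w k' p else 0)"
      proof (cases "q = j")
        case True then show ?thesis using j by (metis)
      next
        case False
        then have "\<sigma> q = p q" using j(2) by (metis fun_upd_other)
        then show ?thesis using False by simp
      qed
    qed simp
    also have "\<dots> = w k' \<sigma> - w k' p" using j unfolding K_def by (simp add: sum.delta)
    finally show "ah k' \<sigma> = x k' \<sigma>" unfolding ah_def e1 w_def by simp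
  qed
  have uniq: "b1 = b2" if b1: "oi_reach N m a b1" "\<forall>k\<in>{1..N}. \<forall>\<sigma>\<in>near_profiles N m p. b1 k \<sigma> = x k \<sigma>"
    and b2: "oi_reach N m a b2" "\<forall>k\<in>{1..N}. \<forall>\<sigma>\<in>near_profiles N m p. b2 k \<sigma> = x k \<sigma>" for b1 b2
  proof -
    obtain H1 where H1: "\<forall>k\<in>{1..N}. \<forall>\<sigma>\<in>profiles N m. b1 k \<sigma> = a k \<sigma> + (\<Sum>q\<in>{1..N}. H1 k q (\<sigma> q))"
      and o1: "\<forall>k \<sigma>. \<not>(k\<in>{1..N} \<and> \<sigma>\<in>profiles N m) \<longrightarrow> b1 k \<sigma> = a k \<sigma>"
      using reach_inv[OF b1(1)] by blast
    obtain H2 where H2: "\<forall>k\<in>{1..N}. \<forall>\<sigma>\<in>profiles N m. b2 k \<sigma> = a k \<sigma> + (\<Sum>q\<in>{1..N}. H2 k q (\<sigma> q))"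
      and o2: "\<forall>k \<sigma>. \<not>(k\<in>{1..N} \<and> \<sigma>\<in>profiles N m) \<longrightarrow> b2 k \<sigma> = a k \<sigma>"
      using reach_inv[OF b2(1)] by blast
    have "b1 k \<sigma> = b2 k \<sigma>" for k \<sigma>
    proof (cases "k\<in>{1..N} \<and> \<sigma>\<in>profiles N m")
      case True
      have d: "\<And>\<tau>. \<tau>\<in>profiles N m \<Longrightarrow> b1 k \<tau> - b2 k \<tau> = (\<Sum>q\<in>{1..N}. H1 k q (\<tau> q) - H2 k q (\<tau> q))"
        using H1 H2 True by (simp add: sum_subtractf)
      have "\<forall>\<tau>\<in>near_profiles N m p. (\<Sum>q\<in>{1..N}. H1 k q (\<tau> q) - H2 k q (\<tau> q)) = 0"
        using d b1(2) b2(2) True unfolding near_profiles_def by force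
      from sep_zero[OF assms(2) this] True d[of \<sigma>] show ?thesis by simp
    next
      case False then show ?thesis using o1 o2 by simp
    qed
    then show ?thesis by (simp add: fun_eq_iff)
  qed
  show ?thesis
    apply (rule ex1I[of _ ah])
    using reach vals gm_from_reach[OF assms(1) reach] apply blast
    using uniq reach vals by blast
qed

end
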